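(* Let $\mathbf A=[\mathbf a_1\ \cdots\ \mathbf a_n]\in\mathbb R^{m\times n}$, let $\mathbf x^0\in\mathbb R^n$ and $\mathcal S:=\mathrm{supp}(\mathbf x^0)$. Suppose $\mathbf A_{\mathcal S}^\top\mathbf A_{\mathcal S}$ is invertible and $$\|(\mathbf A_{\mathcal S}^\top\mathbf A_{\mathcal S})^{-1}\|_2\le 2,\qquad \max_{i\in\mathcal S^c}\|\mathbf A_{\mathcal S}^\top\mathbf a_i\|_2\le 1,$$ and there exists $\mathbf y\in\mathbb R^m$ such that $\mathbf v=\mathbf A^\top\mathbf y$ satisfies $$\|\mathbf v_{\mathcal S}-\mathrm{sign}(\mathbf x^0_{\mathcal S})\|_2\le 1/4,\qquad \|\mathbf v_{\mathcal S^c}\|_\infty\le 1/4.$$ Then for every $\alpha>0$ with $\alpha\ge 8\|\mathbf x^0\|_2$, $\mathbf x^0$ is the unique solution of problem (P2) with $\mathbf b=\mathbf A\mathbf x^0$.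
   Context: Problem (P2) is $\min_{\mathbf x}\{\|\mathbf x\|_1+\frac{1}{2\alpha}\|\mathbf x\|_2^2:\ \mathbf A\mathbf x=\mathbf b\}$. $\mathbf A_{\mathcal S}$ is the submatrix of columns of $\mathbf A$ indexed by $\mathcal S$; $\mathbf v_{\mathcal S}$ is the restriction of $\mathbf v$ to $\mathcal S$; $\mathrm{sign}$ acts componentwise; $\|\cdot\|_2$ on matrices is the spectral norm. *)

theory Defs
  imports "HOL-Analysis.Analysis"
begin

definition supp_vec :: "real ^ 'n \<Rightarrow> 'n set" where
  "supp_vec x = {i. x $ i \<noteq> 0}"

text \<open>Gram matrix of the column submatrix: (A_S^T A_S) restricted to S x S,
  entry (i,j) = a_i \<bullet> a_j for i,j in S.\<close>
definition gram_sub :: "real ^ 'n ^ 'm \<Rightarrow> 'n \<Rightarrow> 'n \<Rightarrow> real" where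
  "gram_sub A i j = column i A \<bullet> column j A"

definition is_inverse_on :: "'i set \<Rightarrow> ('i \<Rightarrow> 'i \<Rightarrow> real) \<Rightarrow> ('i \<Rightarrow> 'i \<Rightarrow> real) \<Rightarrow> bool" where
  "is_inverse_on S G H \<longleftrightarrow>
     (\<forall>i\<in>S. \<forall>j\<in>S. (\<Sum>k\<in>S. H i k * G k j) = (if i = j then 1 else 0)) \<and>
     (\<forall>i\<in>S. \<forall>j\<in>S. (\<Sum>k\<in>S. G i k * H k j) = (if i = j then 1 else 0))"

definition spec_norm_on :: "'i set \<Rightarrow> ('i \<Rightarrow> 'i \<Rightarrow> real) \<Rightarrow> real" where
  "spec_norm_on S M = Sup {sqrt (\<Sum>i\<in>S. (\<Sum>j\<in>S. M i j * u j)\<^sup>2) | u. (\<Sum>j\<in>S. (u j)\<^sup>2) \<le> 1}"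

definition P2_obj :: "real \<Rightarrow> real ^ 'n \<Rightarrow> real" where
  "P2_obj \<alpha> x = (\<Sum>i\<in>UNIV. \<bar>x $ i\<bar>) + 1 / (2 * \<alpha>) * (norm x)\<^sup>2"

definition P2_solutions :: "real ^ 'n ^ 'm \<Rightarrow> real ^ 'm \<Rightarrow> real \<Rightarrow> (real ^ 'n) set" where
  "P2_solutions A b \<alpha> =
     {x. A *v x = b \<and> (\<forall>z. A *v z = b \<longrightarrow> P2_obj \<alpha> x \<le> P2_obj \<alpha> z)}"

end

theory Submission imports Defs begin

lemma spec_bound:
  fixes S :: "'i set" and H :: "'i \<Rightarrow> 'i \<Rightarrow> real"
  assumes fin: "finite S" and sp: "spec_norm_on S H \<le> 2"
  shows "L2_set (\<lambda>i. \<Sum>j\<in>S. H i j * e j) S \<le> 2 * L2_set e S"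
proof -
  define X where "X = {sqrt (\<Sum>i\<in>S. (\<Sum>j\<in>S. H i j * u j)\<^sup>2) | u. (\<Sum>j\<in>S. (u j)\<^sup>2) \<le> 1}"
  define B where "B = sqrt (\<Sum>i\<in>S. (L2_set (H i) S)\<^sup>2)"
  have bd: "x \<le> B" if "x \<in> X" for x
  proof -
    from that obtain u where x: "x = sqrt (\<Sum>i\<in>S. (\<Sum>j\<in>S. H i j * u j)\<^sup>2)"
      and u: "(\<Sum>j\<in>S. (u j)\<^sup>2) \<le> 1" unfolding X_def by auto
    have Lu: "L2_set u S \<le> 1" using u unfolding L2_set_def by simp
    have "\<bar>\<Sum>j\<in>S. H i j * u j\<bar> \<le> L2_set (H i) S" for i
    proof -
      have "\<bar>\<Sum>j\<in>S. H i j * u j\<bar> \<le> (\<Sum>j\<in>S. \<bar>H i j\<bar> * \<bar>u j\<bar>)"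
        by (metis (no_types, lifting) abs_mult sum.cong sum_abs)
      also have "\<dots> \<le> L2_set (H i) S * L2_set u S" by (rule L2_set_mult_ineq)
      also have "\<dots> \<le> L2_set (H i) S" using Lu
        by (simp add: mult_left_le)
      finally show ?thesis .
    qed
    hence "(\<Sum>j\<in>S. H i j * u j)\<^sup>2 \<le> (L2_set (H i) S)\<^sup>2" for i
      by (metis abs_ge_zero power2_abs power_mono)
    hence "(\<Sum>i\<in>S. (\<Sum>j\<in>S. H i j * u j)\<^sup>2) \<le> (\<Sum>i\<in>S. (L2_set (H i) S)\<^sup>2)"
      by (intro sum_mono)
    thus ?thesis unfolding x B_def by (rule real_sqrt_le_mono)
  qed
  have ne: "X \<noteq> {}" unfolding X_def by (auto intro!: exI[of _ "\<lambda>_. 0"])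
  have bdd: "bdd_above X" using bd by (auto simp: bdd_above_def)
  have le2: "x \<le> 2" if "x \<in> X" for x
    using cSup_upper[OF that bdd] sp unfolding spec_norm_on_def X_def by simp
  show ?thesis
  proof (cases "L2_set e S = 0")
    case True
    hence "\<forall>j\<in>S. e j = 0" using L2_set_eq_0_iff[OF fin] by blast
    hence "\<forall>i\<in>S. (\<Sum>j\<in>S. H i j * e j) = 0" by simp
    hence "L2_set (\<lambda>i. \<Sum>j\<in>S. H i j * e j) S = 0" by (rule L2_set_0')
    thus ?thesis using True by simp
  next
    case False
    define r where "r = L2_set e S"
    have r: "r > 0" using False L2_set_nonneg[of e S] unfolding r_def by linarith
    define u where "u j = e j / r" for j
    have "L2_set u S = L2_set e S / r" unfolding u_def
      using L2_set_left_distrib[of "1/r" e S] r by (simp add: divide_inverse mult.commute)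
    hence Lu: "L2_set u S = 1" using r r_def by simp
    have "(\<Sum>j\<in>S. (u j)\<^sup>2) = (L2_set u S)\<^sup>2" unfolding L2_set_def
      by (simp add: sum_nonneg)
    hence "(\<Sum>j\<in>S. (u j)\<^sup>2) \<le> 1" using Lu by simp
    hence "sqrt (\<Sum>i\<in>S. (\<Sum>j\<in>S. H i j * u j)\<^sup>2) \<in> X" unfolding X_def by blast
    hence A: "L2_set (\<lambda>i. \<Sum>j\<in>S. H i j * u j) S \<le> 2" using le2 unfolding L2_set_def by blast
    have "(\<lambda>i. \<Sum>j\<in>S. H i j * u j) = (\<lambda>i. (1/r) * (\<Sum>j\<in>S. H i j * e j))"
      unfolding u_def by (simp add: sum_distrib_left divide_inverse mult_ac)
    hence "L2_set (\<lambda>i. \<Sum>j\<in>S. H i j * u j) S = L2_set (\<lambda>i. \<Sum>j\<in>S. H i j * e j) S / r"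
      using L2_set_right_distrib[of "1/r" "\<lambda>i. \<Sum>j\<in>S. H i j * e j" S] r by (simp add: divide_inverse mult.commute)
    with A r show ?thesis unfolding r_def[symmetric] by (simp add: divide_le_eq mult.commute)
  qed
qed

lemma tA_comp: "(transpose A *v u) $ i = column i A \<bullet> (u :: real ^ 'm)"
  for A :: "real ^ 'n ^ 'm"
  by (simp add: matrix_vector_mult_def transpose_def column_def inner_vec_def mult.commute)

lemma abs_step: "\<bar>(x::real) + h\<bar> - \<bar>x\<bar> \<ge> sgn x * h"
  by (cases "x > 0"; cases "x < 0") (auto simp: sgn_if abs_if)

theorem mainTheorem7:
  fixes A :: "real ^ 'n ^ 'm" and x0 :: "real ^ 'n"
  defines "S \<equiv> supp_vec x0"
  assumes inv: "\<exists>H. is_inverse_on S (gram_sub A) H \<and> spec_norm_on S H \<le> 2"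
    and coh: "\<forall>i\<in>- S. sqrt (\<Sum>j\<in>S. (column j A \<bullet> column i A)\<^sup>2) \<le> 1"
    and cert: "\<exists>y :: real ^ 'm. let v = transpose A *v y in
                 sqrt (\<Sum>i\<in>S. (v $ i - sgn (x0 $ i))\<^sup>2) \<le> 1/4 \<and>
                 (\<forall>i\<in>- S. \<bar>v $ i\<bar> \<le> 1/4)"
  shows "\<forall>\<alpha>::real. \<alpha> > 0 \<and> \<alpha> \<ge> 8 * norm x0 \<longrightarrow> P2_solutions A (A *v x0) \<alpha> = {x0}"
proof (intro allI impI)
  fix \<alpha> :: real
  assume "\<alpha> > 0 \<and> \<alpha> \<ge> 8 * norm x0"
  hence ap: "\<alpha> > 0" and a8: "\<alpha> \<ge> 8 * norm x0" by auto
  obtain H where Hinv: "is_inverse_on S (gram_sub A) H" and Hs: "spec_norm_on S H \<le> 2"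
    using inv by blast
  obtain y :: "real ^ 'm" where
    y1: "sqrt (\<Sum>i\<in>S. ((transpose A *v y) $ i - sgn (x0 $ i))\<^sup>2) \<le> 1/4" and
    y2: "\<forall>i\<in>- S. \<bar>(transpose A *v y) $ i\<bar> \<le> 1/4"
    using cert by (auto simp: Let_def)
  define v where "v = transpose A *v y"
  have fin: "finite S" by simp
  define e where "e i = x0 $ i / \<alpha> + - (v $ i - sgn (x0 $ i))" for i
  define c where "c i = (\<Sum>j\<in>S. H i j * e j)" for i
  define u where "u = (\<Sum>k\<in>S. c k *\<^sub>R column k A)"
  define w where "w = transpose A *v (y + u)"
  have wsplit: "w $ i = v $ i + (\<Sum>k\<in>S. c k * (column i A \<bullet> column k A))" for i
    unfolding w_def v_def matrix_vector_right_distrib vector_add_component tA_comp u_def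
    by (simp add: inner_sum_right)
  have F1: "w $ i = sgn (x0 $ i) + x0 $ i / \<alpha>" if iS: "i \<in> S" for i
  proof -
    have "(\<Sum>k\<in>S. c k * (column i A \<bullet> column k A))
        = (\<Sum>k\<in>S. \<Sum>j\<in>S. gram_sub A i k * H k j * e j)"
      unfolding c_def gram_sub_def by (simp add: sum_distrib_left mult_ac)
    also have "\<dots> = (\<Sum>j\<in>S. (\<Sum>k\<in>S. gram_sub A i k * H k j) * e j)"
      by (subst sum.swap) (simp add: sum_distrib_right)
    also have "\<dots> = (\<Sum>j\<in>S. (if i = j then 1 else 0) * e j)"
      using Hinv iS unfolding is_inverse_on_def by (intro sum.cong) auto
    also have "\<dots> = (\<Sum>j\<in>S. if i = j then e j else 0)" by (intro sum.cong) auto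
    also have "\<dots> = e i" using iS fin by (simp add: sum.delta)
    finally show ?thesis using wsplit[of i] unfolding e_def by simp
  qed
  have nx: "L2_set (\<lambda>i. x0 $ i) S \<le> norm x0"
  proof -
    have "(\<Sum>i\<in>S. (x0 $ i)\<^sup>2) \<le> (\<Sum>i\<in>UNIV. (x0 $ i)\<^sup>2)"
      by (rule sum_mono2) auto
    thus ?thesis unfolding L2_set_def norm_vec_def by (simp add: L2_set_def)
  qed
  have Le: "L2_set e S \<le> 3/8"
  proof -
    have "L2_set e S \<le> L2_set (\<lambda>i. x0 $ i / \<alpha>) S + L2_set (\<lambda>i. - (v $ i - sgn (x0 $ i))) S"
      unfolding e_def by (rule L2_set_triangle_ineq)
    also have "L2_set (\<lambda>i. - (v $ i - sgn (x0 $ i))) S = L2_set (\<lambda>i. v $ i - sgn (x0 $ i)) S"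
      unfolding L2_set_def by (simp add: power2_commute)
    also have "\<dots> \<le> 1/4" using y1 unfolding L2_set_def v_def .
    also have "L2_set (\<lambda>i. x0 $ i / \<alpha>) S = L2_set (\<lambda>i. x0 $ i) S * (1/\<alpha>)"
      using L2_set_left_distrib[of "1/\<alpha>" "\<lambda>i. x0 $ i" S] ap by simp
    also have "\<dots> \<le> norm x0 * (1/\<alpha>)" using nx ap by (intro mult_right_mono) auto
    also have "\<dots> \<le> 1/8" using a8 ap by (simp add: field_simps)
    finally show ?thesis by simp
  qed
  have Lc: "L2_set c S \<le> 3/4"
    using spec_bound[OF fin Hs, of e] Le unfolding c_def by simp
  have F2: "\<bar>w $ i\<bar> \<le> 1" if iS: "i \<notin> S" for i
  proof -
    have "\<bar>\<Sum>k\<in>S. c k * (column i A \<bullet> column k A)\<bar> \<le> (\<Sum>k\<in>S. \<bar>c k\<bar> * \<bar>column k A \<bullet> column i A\<bar>)"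
      by (metis (no_types, lifting) abs_mult inner_commute sum.cong sum_abs)
    also have "\<dots> \<le> L2_set c S * L2_set (\<lambda>k. column k A \<bullet> column i A) S"
      by (rule L2_set_mult_ineq)
    also have "\<dots> \<le> 3/4 * 1"
      using Lc coh iS unfolding L2_set_def by (intro mult_mono) (auto simp: sum_nonneg)
    finally have "\<bar>\<Sum>k\<in>S. c k * (column i A \<bullet> column k A)\<bar> \<le> 3/4" by simp
    moreover have "\<bar>v $ i\<bar> \<le> 1/4" using y2 iS unfolding v_def by auto
    ultimately show ?thesis using wsplit[of i] by linarith
  qed
  have key: "P2_obj \<alpha> x0 + (norm (z - x0))\<^sup>2 / (2 * \<alpha>) \<le> P2_obj \<alpha> z"
    if Az: "A *v z = A *v x0" for z
  proof -
    define h where "h = z - x0"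
    have Ah: "A *v h = 0" unfolding h_def using Az by (simp add: matrix_vector_mult_diff_distrib)
    have wh: "w \<bullet> h = 0"
      unfolding w_def transpose_matrix_vector dot_lmul_matrix Ah by simp
    have comp: "\<bar>z $ i\<bar> - \<bar>x0 $ i\<bar> \<ge> (w $ i - x0 $ i / \<alpha>) * h $ i" for i
    proof (cases "i \<in> S")
      case True
      have "z $ i = x0 $ i + h $ i" unfolding h_def by simp
      thus ?thesis using F1[OF True] abs_step[of "x0 $ i" "h $ i"] by simp
    next
      case False
      hence x0i: "x0 $ i = 0" unfolding S_def supp_vec_def by simp
      have "z $ i = h $ i" unfolding h_def using x0i by simp
      moreover have "w $ i * h $ i \<le> \<bar>h $ i\<bar>"
        using F2[OF False] by (metis abs_ge_self abs_mult mult_left_le_one_le abs_ge_zero order_trans)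
      ultimately show ?thesis using x0i by simp
    qed
    have s1: "(\<Sum>i\<in>UNIV. \<bar>z $ i\<bar>) - (\<Sum>i\<in>UNIV. \<bar>x0 $ i\<bar>) \<ge> (\<Sum>i\<in>UNIV. (w $ i - x0 $ i / \<alpha>) * h $ i)"
      using sum_mono[of UNIV "\<lambda>i. (w $ i - x0 $ i / \<alpha>) * h $ i" "\<lambda>i. \<bar>z $ i\<bar> - \<bar>x0 $ i\<bar>"] comp
      by (simp add: sum_subtractf)
    have s2: "(\<Sum>i\<in>UNIV. (w $ i - x0 $ i / \<alpha>) * h $ i) = w \<bullet> h - (x0 \<bullet> h) / \<alpha>"
      by (simp add: inner_vec_def left_diff_distrib sum_subtractf sum_divide_distrib)
    have zz: "z = x0 + h" unfolding h_def by simp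
    have s3: "(norm z)\<^sup>2 = (norm x0)\<^sup>2 + 2 * (x0 \<bullet> h) + (norm h)\<^sup>2"
      unfolding zz power2_norm_eq_inner by (simp add: inner_add inner_commute)
    have "P2_obj \<alpha> z - P2_obj \<alpha> x0 \<ge> (norm h)\<^sup>2 / (2 * \<alpha>)"
    proof -
      have t1: "(\<Sum>i\<in>UNIV. \<bar>z $ i\<bar>) - (\<Sum>i\<in>UNIV. \<bar>x0 $ i\<bar>) \<ge> - (x0 \<bullet> h) / \<alpha>"
        using s1 unfolding s2 wh by simp
      have t2: "1 / (2 * \<alpha>) * (norm z)\<^sup>2 - 1 / (2 * \<alpha>) * (norm x0)\<^sup>2
           = (x0 \<bullet> h) / \<alpha> + (norm h)\<^sup>2 / (2 * \<alpha>)"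
        unfolding s3 using ap by (simp add: field_simps)
      show ?thesis using t1 t2 unfolding P2_obj_def by linarith
    qed
    thus ?thesis unfolding h_def by simp
  qed
  show "P2_solutions A (A *v x0) \<alpha> = {x0}"
  proof
    show "{x0} \<subseteq> P2_solutions A (A *v x0) \<alpha>"
    proof -
      have "P2_obj \<alpha> x0 \<le> P2_obj \<alpha> z" if "A *v z = A *v x0" for z
      proof -
        have "0 \<le> (norm (z - x0))\<^sup>2 / (2 * \<alpha>)" using ap by simp
        thus ?thesis using key[OF that] by linarith
      qed
      thus ?thesis unfolding P2_solutions_def by auto
    qed
  next
    show "P2_solutions A (A *v x0) \<alpha> \<subseteq> {x0}"
    proof
      fix x assume "x \<in> P2_solutions A (A *v x0) \<alpha>"
      hence Ax: "A *v x = A *v x0" and le: "P2_obj \<alpha> x \<le> P2_obj \<alpha> x0"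
        unfolding P2_solutions_def by auto
      have "(norm (x - x0))\<^sup>2 / (2 * \<alpha>) \<le> 0" using key[OF Ax] le by linarith
      hence "(norm (x - x0))\<^sup>2 \<le> 0" using ap by (simp add: divide_le_0_iff)
      hence "x = x0" by simp
      thus "x \<in> {x0}" by simp
    qed
  qed
qed

end
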